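(* Fix positive reals $d_{close}<d_{min}\le d_{max}$ and $d_{open}>0$. (1) For every real $c$ with $0\le c<d_{open}$ there exist a regular run $R$ (with a single track) and reals $0\le\alpha<\beta$ with $\alpha+c<\beta-\Delta_{close}$ such that TrackStatus$(x)\ne$ incrossing over $(\alpha,\beta)$ for every track $x$, but GateStatus $\neq$ opened at some moment of $[\alpha+c,\,\beta-\Delta_{close}]$. (2) For every real $C<\Delta_{close}$ there exist a regular run $R$ (with a single track) and reals $0\le\alpha<\beta$ with $\alpha+d_{open}<\beta-C$ such that TrackStatus$(x)\ne$ incrossing over $(\alpha,\beta)$ for every track $x$, but GateStatus $\neq$ opened at some moment of $[\alpha+d_{open},\,\beta-C]$.
   Context: Setting (evolving algebra for the railroad crossing). States are structures over a vocabulary containing: a finite universe Tracks; the reals and ExtendedReals $=\mathbb{R}\cup\{\infty\}$ with standard $<$ and $+$ ($\infty$ largest); a nullary real-valued symbol $\mathrm{CT}$ (current time); positive real constants $d_{close},d_{open},d_{min},d_{max}$ with $d_{close}<d_{min}\le d_{max}$; a unary function TrackStatus from Tracks to $\{\text{empty},\text{coming},\text{incrossing}\}$; a unary function Deadline from Tracks to ExtendedReals; a nullary Dir with values in $\{\text{open},\text{close}\}$; a nullary GateStatus with values in $\{\text{opened},\text{closed}\}$. Put $W=d_{min}-d_{close}$ and $\Delta_{close}=d_{close}+(d_{max}-d_{min})=d_{max}-W$. For a track $x$, $s(x)$ is the condition [$\mathrm{TrackStatus}(x)=\text{empty}$ or $\mathrm{CT}+d_{open}<\mathrm{Deadline}(x)$],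 and SafeToOpen is $\forall x\in\mathrm{Tracks}\ s(x)$. The program has two modules (agents). Gate: simultaneously OpenGate "if Dir=open then GateStatus:=opened" and CloseGate "if Dir=close then GateStatus:=closed". Controller: simultaneously, for every track $x$, SetDeadline$(x)$ "if TrackStatus$(x)$=coming and Deadline$(x)=\infty$ then Deadline$(x):=\mathrm{CT}+W$", SignalClose$(x)$ "if $\mathrm{CT}=$Deadline$(x)$ then Dir:=close", ClearDeadline$(x)$ "if TrackStatus$(x)$=empty and Deadline$(x)<\infty$ then Deadline$(x):=\infty$", together with SignalOpen "if Dir=close and SafeToOpen then Dir:=open". Executing a module means computing all updates it generates in the current state and performing them simultaneously (nothing happens if the update set is inconsistent). A module is enabled at a state if its update set is consistent and contains an update that changes the state. TrackStatus is external (changed only by the environment); Deadline, Dir, GateStatus are internal (changed only by the modules); other symbols are static. Runs: for $t\mapsto R(t)$, $t\in[0,\infty)$, let $\rho(t)$ be the reduct of $R(t)$ without CT. $R$ is a pre-run if all $R(t)$ share a superuniverse, $\mathrm{CT}=t$ in $R(t)$, and for every $\tau>0$ there are $0=t_0<\dots<t_n=\tau$ with $\rho$ constant on each $(t_i,t_{i+1})$. For a term $e$ (free variables fixed), $e_t$ is its value in $R(t)$, $e_{t+}$ (resp. $e_{t-}$, $t>0$) its constant value on some $(t,t+\epsilon)$ (resp. $(t-\epsilon,t)$); likewise $\rho(t\pm)$. $e$ holds over an interval if it holds at each point; $e$ becomes (is set to) $a$ at $t$ if $e_{t-}\ne a=e_t$ or $e_t\neq a=e_{t+}$. A pre-run is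 a run if (i) whenever $\rho(t+)\neq\rho(t)$, $\rho(t+)$ is the CT-free reduct of the result of executing some modules at $R(t)$ (these agents fire at $t$), with external functions equal in $\rho(t)$ and $\rho(t+)$; (ii) whenever $t>0$ and $\rho(t)\ne\rho(t-)$, they differ only in external functions. An agent is immediate if it fires at every moment it is enabled; bounded if immediate or there is $b>0$ with no interval $(t,t+b)$ over which it is enabled but never fires. Initial states: TrackStatus$(x)$=empty and Deadline$(x)=\infty$ for every track $x$. A regular run is a run $R$ with $R(0)$ initial such that: (Train Motion) for each track $x$ there is a finite or infinite sequence $0=t_0<t_1<t_2<\cdots$ (the significant moments of $x$) with TrackStatus$(x)$=empty over each $[t_{3i},t_{3i+1})$, =coming over each $[t_{3i+1},t_{3i+2})$ where $d_{min}\le t_{3i+2}-t_{3i+1}\le d_{max}$, =incrossing over each $[t_{3i+2},t_{3i+3})$, and, if the sequence is finite with last element $t_k$, then $3\mid k$ and TrackStatus$(x)$=empty over $[t_k,\infty)$; (Controller Timing) Controller is immediate; (Gate Timing) Gate is bounded, there is no interval $(t,t+d_{close})$ over which Dir=close and GateStatus=opened both hold, and no interval $(t,t+d_{open})$ over which Dir=open and GateStatus=closed both hold. *)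

theory Defs
  imports Complex_Main "HOL-Library.Extended_Real"
begin

datatype tstatus = Empty | Coming | Incrossing
datatype dirv = DOpen | DClose
datatype gstatus = Opened | Closed

text \<open>CT-free reduct of a state (the dynamic part). Tracks are the elements of the
  (finite) type 'tr; static symbols (reals, the constants d_close, ... ) are parameters.
  ExtendedReals are rendered by ereal (the value minus infinity never arises).\<close>
record 'tr st =
  TS   :: "'tr \<Rightarrow> tstatus"
  DL   :: "'tr \<Rightarrow> ereal"
  Dir  :: dirv
  Gate :: gstatus

datatype 'tr upd = UDL 'tr ereal | UDir dirv | UGate gstatus

datatype agent = GateA | ControllerA

definition consistent :: "'tr upd set \<Rightarrow> bool" where
  "consistent U \<longleftrightarrow>
     (\<forall>x v w. UDL x v \<in> U \<and> UDL x w \<in> U \<longrightarrow> v = w) \<and>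
     (\<forall>v w. UDir v \<in> U \<and> UDir w \<in> U \<longrightarrow> v = w) \<and>
     (\<forall>v w. UGate v \<in> U \<and> UGate w \<in> U \<longrightarrow> v = w)"

definition apply_upds :: "'tr upd set \<Rightarrow> 'tr st \<Rightarrow> 'tr st" where
  "apply_upds U s = s\<lparr>
     DL := (\<lambda>x. if \<exists>v. UDL x v \<in> U then (SOME v. UDL x v \<in> U) else DL s x),
     Dir := (if \<exists>v. UDir v \<in> U then (SOME v. UDir v \<in> U) else Dir s),
     Gate := (if \<exists>v. UGate v \<in> U then (SOME v. UGate v \<in> U) else Gate s)\<rparr>"

definition changes :: "'tr st \<Rightarrow> 'tr upd \<Rightarrow> bool" where
  "changes s u = (case u of UDL x v \<Rightarrow> DL s x \<noteq> v | UDir v \<Rightarrow> Dir s \<noteq> v | UGate v \<Rightarrow> Gate s \<noteq> v)"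

definition safe_to_open :: "real \<Rightarrow> real \<Rightarrow> 'tr st \<Rightarrow> bool" where
  "safe_to_open d_open ct s \<longleftrightarrow>
     (\<forall>x. TS s x = Empty \<or> ereal (ct + d_open) < DL s x)"

definition gate_upds :: "'tr st \<Rightarrow> 'tr upd set" where
  "gate_upds s = (if Dir s = DOpen then {UGate Opened} else {})
               \<union> (if Dir s = DClose then {UGate Closed} else {})"

text \<open>Update set of the Controller; W = d_min - d_close; ct is the value of CT.\<close>
definition controller_upds :: "real \<Rightarrow> real \<Rightarrow> real \<Rightarrow> real \<Rightarrow> 'tr st \<Rightarrow> 'tr upd set" where
  "controller_upds d_close d_open d_min ct s =
      {UDL x (ereal (ct + (d_min - d_close))) | x. TS s x = Coming \<and> DL s x = \<infinity>}
    \<union> {UDir DClose | x. ereal ct = DL s x}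
    \<union> {UDL x \<infinity> | x. TS s x = Empty \<and> DL s x < \<infinity>}
    \<union> (if Dir s = DClose \<and> safe_to_open d_open ct s then {UDir DOpen} else {})"

definition module_upds :: "real \<Rightarrow> real \<Rightarrow> real \<Rightarrow> agent \<Rightarrow> real \<Rightarrow> 'tr st \<Rightarrow> 'tr upd set" where
  "module_upds d_close d_open d_min a ct s =
     (case a of GateA \<Rightarrow> gate_upds s | ControllerA \<Rightarrow> controller_upds d_close d_open d_min ct s)"

text \<open>Executing the set A of modules at the state with CT = ct: each module whose
  update set is consistent performs its updates (modules write disjoint locations).\<close>
definition exec :: "real \<Rightarrow> real \<Rightarrow> real \<Rightarrow> agent set \<Rightarrow> real \<Rightarrow> 'tr st \<Rightarrow> 'tr st" where
  "exec d_close d_open d_min A ct s =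
     apply_upds (\<Union>a\<in>A. if consistent (module_upds d_close d_open d_min a ct s)
                        then module_upds d_close d_open d_min a ct s else {}) s"

definition enabled :: "real \<Rightarrow> real \<Rightarrow> real \<Rightarrow> agent \<Rightarrow> real \<Rightarrow> 'tr st \<Rightarrow> bool" where
  "enabled d_close d_open d_min a ct s \<longleftrightarrow>
     consistent (module_upds d_close d_open d_min a ct s) \<and>
     (\<exists>u\<in>module_upds d_close d_open d_min a ct s. changes s u)"

text \<open>A run is rho : [0,\<infinity>) \<rightarrow> CT-free states; CT = t in R(t) is implicit.\<close>

definition prerun :: "(real \<Rightarrow> 'tr st) \<Rightarrow> bool" where
  "prerun R \<longleftrightarrow> (\<forall>\<tau>>0. \<exists>(n::nat) (ts::nat \<Rightarrow> real).
      ts 0 = 0 \<and> ts n = \<tau> \<and> (\<forall>i<n. ts i < ts (Suc i)) \<and>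
      (\<forall>i<n. \<forall>u v. ts i < u \<and> u < ts (Suc i) \<and> ts i < v \<and> v < ts (Suc i) \<longrightarrow> R u = R v))"

definition rlim :: "(real \<Rightarrow> 'tr st) \<Rightarrow> real \<Rightarrow> 'tr st" where
  "rlim R t = (THE s. \<exists>e>0. \<forall>u. t < u \<and> u < t + e \<longrightarrow> R u = s)"

definition llim :: "(real \<Rightarrow> 'tr st) \<Rightarrow> real \<Rightarrow> 'tr st" where
  "llim R t = (THE s. \<exists>e>0. \<forall>u. t - e < u \<and> u < t \<longrightarrow> R u = s)"

definition is_run :: "real \<Rightarrow> real \<Rightarrow> real \<Rightarrow> (real \<Rightarrow> 'tr st) \<Rightarrow> bool" where
  "is_run d_close d_open d_min R \<longleftrightarrow> prerun R \<and>
     (\<forall>t\<ge>0. rlim R t \<noteq> R t \<longrightarrow>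
        (\<exists>A. rlim R t = exec d_close d_open d_min A t (R t)) \<and> TS (rlim R t) = TS (R t)) \<and>
     (\<forall>t>0. llim R t \<noteq> R t \<longrightarrow>
        DL (llim R t) = DL (R t) \<and> Dir (llim R t) = Dir (R t) \<and> Gate (llim R t) = Gate (R t))"

definition fires :: "real \<Rightarrow> real \<Rightarrow> real \<Rightarrow> agent \<Rightarrow> (real \<Rightarrow> 'tr st) \<Rightarrow> real \<Rightarrow> bool" where
  "fires d_close d_open d_min a R t \<longleftrightarrow> rlim R t \<noteq> R t \<and>
     (\<exists>A. a \<in> A \<and> rlim R t = exec d_close d_open d_min A t (R t))"

definition immediate :: "real \<Rightarrow> real \<Rightarrow> real \<Rightarrow> agent \<Rightarrow> (real \<Rightarrow> 'tr st) \<Rightarrow> bool" where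
  "immediate d_close d_open d_min a R \<longleftrightarrow>
     (\<forall>t\<ge>0. enabled d_close d_open d_min a t (R t) \<longrightarrow> fires d_close d_open d_min a R t)"

definition bounded :: "real \<Rightarrow> real \<Rightarrow> real \<Rightarrow> agent \<Rightarrow> (real \<Rightarrow> 'tr st) \<Rightarrow> bool" where
  "bounded d_close d_open d_min a R \<longleftrightarrow> immediate d_close d_open d_min a R \<or>
     (\<exists>b>0. \<not> (\<exists>t\<ge>0. (\<forall>s. t < s \<and> s < t + b \<longrightarrow>
                 enabled d_close d_open d_min a s (R s) \<and> \<not> fires d_close d_open d_min a R s)))"

definition initial :: "'tr st \<Rightarrow> bool" where
  "initial s \<longleftrightarrow> (\<forall>x. TS s x = Empty \<and> DL s x = \<infinity>)"

definition motion_block :: "real \<Rightarrow> real \<Rightarrow> (real \<Rightarrow> 'tr st) \<Rightarrow> 'tr \<Rightarrow> (nat \<Rightarrow> real) \<Rightarrow> nat \<Rightarrow> bool" where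
  "motion_block d_min d_max R x ts i \<longleftrightarrow>
     (\<forall>t. ts (3*i) \<le> t \<and> t < ts (3*i+1) \<longrightarrow> TS (R t) x = Empty) \<and>
     (\<forall>t. ts (3*i+1) \<le> t \<and> t < ts (3*i+2) \<longrightarrow> TS (R t) x = Coming) \<and>
     d_min \<le> ts (3*i+2) - ts (3*i+1) \<and> ts (3*i+2) - ts (3*i+1) \<le> d_max \<and>
     (\<forall>t. ts (3*i+2) \<le> t \<and> t < ts (3*i+3) \<longrightarrow> TS (R t) x = Incrossing)"

definition train_motion :: "real \<Rightarrow> real \<Rightarrow> (real \<Rightarrow> 'tr st) \<Rightarrow> 'tr \<Rightarrow> bool" where
  "train_motion d_min d_max R x \<longleftrightarrow> (\<exists>ts::nat \<Rightarrow> real. ts 0 = 0 \<and>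
     ((strict_mono ts \<and> (\<forall>i. motion_block d_min d_max R x ts i)) \<or>
      (\<exists>k. 3 dvd k \<and> (\<forall>i<k. ts i < ts (Suc i)) \<and>
           (\<forall>i. 3*i+3 \<le> k \<longrightarrow> motion_block d_min d_max R x ts i) \<and>
           (\<forall>t\<ge>ts k. TS (R t) x = Empty))))"

definition regular_run :: "real \<Rightarrow> real \<Rightarrow> real \<Rightarrow> real \<Rightarrow> (real \<Rightarrow> 'tr st) \<Rightarrow> bool" where
  "regular_run d_close d_open d_min d_max R \<longleftrightarrow>
     is_run d_close d_open d_min R \<and> initial (R 0) \<and>
     (\<forall>x. train_motion d_min d_max R x) \<and>
     immediate d_close d_open d_min ControllerA R \<and>
     bounded d_close d_open d_min GateA R \<and>
     \<not> (\<exists>t\<ge>0. \<forall>s. t < s \<and> s < t + d_close \<longrightarrow> Dir (R s) = DClose \<and> Gate (R s) = Opened) \<and>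
     \<not> (\<exists>t\<ge>0. \<forall>s. t < s \<and> s < t + d_open \<longrightarrow> Dir (R s) = DOpen \<and> Gate (R s) = Closed)"

definition Delta_close :: "real \<Rightarrow> real \<Rightarrow> real \<Rightarrow> real" where
  "Delta_close d_close d_min d_max = d_close + (d_max - d_min)"

end

theory Submission
  imports Defs
begin



lemma prerun_intro:
  fixes R :: "real \<Rightarrow> 'tr st"
  assumes fin: "finite P"
    and const: "\<And>u v. 0 < u \<Longrightarrow> u < v \<Longrightarrow> (\<forall>p\<in>P. p < u \<or> v < p) \<Longrightarrow> R u = R v"
  shows "prerun R"
  unfolding prerun_def
proof (intro allI impI)
  fix \<tau> :: real assume tau: "0 < \<tau>"
  define S where "S = insert 0 (insert \<tau> {p\<in>P. 0 < p \<and> p < \<tau>})"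
  have finS: "finite S" using fin by (simp add: S_def)
  obtain l where l: "sorted_wrt (<) l" "set l = S" "length l = card S"
    using finite_set_strict_sorted[OF finS] by blast
  have Ssub: "\<And>x. x \<in> S \<Longrightarrow> 0 \<le> x \<and> x \<le> \<tau>" using tau by (auto simp: S_def)
  have ne: "l \<noteq> []" using l(2) by (auto simp: S_def)
  define n where "n = length l - 1"
  have nlt: "n < length l" using ne by (simp add: n_def)
  have mono: "\<And>i j. i \<le> j \<Longrightarrow> j < length l \<Longrightarrow> l ! i \<le> l ! j"
    by (metis l(1) le_neq_implies_less order.refl less_imp_le sorted_wrt_nth_less)
  have lin: "\<And>i. i < length l \<Longrightarrow> l ! i \<in> S" using l(2) by auto
  have "0 \<in> set l" using l(2) by (simp add: S_def)
  then obtain j where j: "j < length l" "l ! j = 0" by (metis in_set_conv_nth)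
  have h0: "l ! 0 = 0"
    using mono[of 0 j] j Ssub[OF lin[of 0]] ne by force
  have "\<tau> \<in> set l" using l(2) by (simp add: S_def)
  then obtain k where k: "k < length l" "l ! k = \<tau>" by (metis in_set_conv_nth)
  have hn: "l ! n = \<tau>"
    using mono[of k n] k Ssub[OF lin[of n]] nlt by (force simp: n_def)
  show "\<exists>n ts. ts 0 = 0 \<and> ts n = \<tau> \<and> (\<forall>i<n. ts i < ts (Suc i)) \<and>
      (\<forall>i<n. \<forall>u v. ts i < u \<and> u < ts (Suc i) \<and> ts i < v \<and> v < ts (Suc i) \<longrightarrow> R u = R v)"
  proof (intro exI conjI allI impI)
    show "l ! 0 = 0" by (rule h0)
    show "l ! n = \<tau>" by (rule hn)
    fix i assume i: "i < n"
    then have si: "Suc i < length l" using nlt by (simp add: n_def)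
    show "l ! i < l ! Suc i" using sorted_wrt_nth_less[OF l(1) _ si, of i] by simp
    fix u v assume uv: "l ! i < u \<and> u < l ! Suc i \<and> l ! i < v \<and> v < l ! Suc i"
    have gap: "\<And>x y. l ! i < x \<Longrightarrow> x < l ! Suc i \<Longrightarrow> l ! i < y \<Longrightarrow> y < l ! Suc i \<Longrightarrow> x < y \<Longrightarrow> R x = R y"
    proof -
      fix x y assume xy: "l ! i < x" "x < l ! Suc i" "l ! i < y" "y < l ! Suc i" "x < y"
      have l0: "0 \<le> l ! i" using Ssub[OF lin] si by simp
      have lt: "l ! Suc i \<le> \<tau>" using Ssub[OF lin[OF si]] by simp
      show "R x = R y"
      proof (rule const)
        show "0 < x" using xy l0 by simp
        show "x < y" by fact
        show "\<forall>p\<in>P. p < x \<or> y < p"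
        proof (rule ccontr)
          assume "\<not> (\<forall>p\<in>P. p < x \<or> y < p)"
          then obtain p where p: "p \<in> P" "x \<le> p" "p \<le> y" by force
          have "p \<in> S" using p xy l0 lt by (auto simp: S_def)
          then obtain m where m: "m < length l" "l ! m = p" using l(2) by (metis in_set_conv_nth)
          have "i < m"
          proof (rule ccontr)
            assume "\<not> i < m" then have "l ! m \<le> l ! i" using mono[of m i] si by simp
            then show False using m p xy by simp
          qed
          moreover have "m < Suc i"
          proof (rule ccontr)
            assume "\<not> m < Suc i" then have "l ! Suc i \<le> l ! m" using mono[of "Suc i" m] m by simp
            then show False using m p xy by simp
          qed
          ultimately show False by simp
        qed
      qed
    qed
    show "R u = R v"
    proof (cases u v rule: linorder_cases)
      case less then show ?thesis using gap uv by blast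
    next
      case equal then show ?thesis by simp
    next
      case greater then show ?thesis using gap[of v u] uv by simp
    qed
  qed
qed




lemma eps_right: "finite (P::real set) \<Longrightarrow> \<exists>e>0. \<forall>p\<in>P. p \<le> t \<or> t + e \<le> p"
proof (induction P rule: finite_induct)
  case empty then show ?case by (auto intro: exI[of _ 1])
next
  case (insert x F)
  then obtain e where e: "e > 0" "\<forall>p\<in>F. p \<le> t \<or> t + e \<le> p" by blast
  show ?case
  proof (cases "x \<le> t")
    case True then show ?thesis using e by auto
  next
    case False then show ?thesis using e by (intro exI[of _ "min e (x - t)"]) auto
  qed
qed

lemma eps_left: "finite (P::real set) \<Longrightarrow> \<exists>e>0. \<forall>p\<in>P. t \<le> p \<or> p \<le> t - e"
proof (induction P rule: finite_induct)
  case empty then show ?case by (auto intro: exI[of _ 1])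
next
  case (insert x F)
  then obtain e where e: "e > 0" "\<forall>p\<in>F. t \<le> p \<or> p \<le> t - e" by blast
  show ?case
  proof (cases "t \<le> x")
    case True then show ?thesis using e by auto
  next
    case False then show ?thesis using e by (intro exI[of _ "min e (t - x)"]) auto
  qed
qed

lemma rlim_eq:
  assumes "e > 0" "\<And>u. t < u \<Longrightarrow> u < t + e \<Longrightarrow> R u = s"
  shows "rlim R t = s"
  unfolding rlim_def
proof (rule the_equality)
  show "\<exists>e>0. \<forall>u. t < u \<and> u < t + e \<longrightarrow> R u = s" using assms by blast
next
  fix s' assume "\<exists>e>0. \<forall>u. t < u \<and> u < t + e \<longrightarrow> R u = s'"
  then obtain e' where e': "e' > 0" "\<forall>u. t < u \<and> u < t + e' \<longrightarrow> R u = s'" by blast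
  let ?u = "t + min e e' / 2"
  have h1: "t < ?u" "?u < t + e" "?u < t + e'" using assms(1) e'(1) by (auto simp: min_def)
  have "R ?u = s" using assms(2)[OF h1(1) h1(2)] .
  moreover have "R ?u = s'" using e'(2) h1 by blast
  ultimately show "s' = s" by simp
qed

lemma llim_eq:
  assumes "e > 0" "\<And>u. t - e < u \<Longrightarrow> u < t \<Longrightarrow> R u = s"
  shows "llim R t = s"
  unfolding llim_def
proof (rule the_equality)
  show "\<exists>e>0. \<forall>u. t - e < u \<and> u < t \<longrightarrow> R u = s" using assms by blast
next
  fix s' assume "\<exists>e>0. \<forall>u. t - e < u \<and> u < t \<longrightarrow> R u = s'"
  then obtain e' where e': "e' > 0" "\<forall>u. t - e' < u \<and> u < t \<longrightarrow> R u = s'" by blast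
  let ?u = "t - min e e' / 2"
  have m: "0 < min e e'" "min e e' \<le> e" "min e e' \<le> e'" using assms(1) e'(1) by auto
  have h1: "t - e < ?u" "?u < t" "t - e' < ?u" using m by linarith+
  have "R ?u = s" using assms(2)[OF h1(1) h1(2)] .
  moreover have "R ?u = s'" using e'(2) h1 by blast
  ultimately show "s' = s" by simp
qed

lemma no_long_interval:
  fixes a g d t :: real
  assumes "a < g" "g - a < d" "\<forall>s. t < s \<and> s < t + d \<longrightarrow> a < s \<and> s \<le> g"
  shows False
proof -
  define \<delta> where "\<delta> = (d - (g - a)) / 2"
  have "a < t + \<delta> \<and> t + \<delta> \<le> g" using assms by (intro assms(3)[rule_format]) (auto simp: \<delta>_def)
  moreover have "a < t + d - \<delta> \<and> t + d - \<delta> \<le> g" using assms by (intro assms(3)[rule_format]) (auto simp: \<delta>_def)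
  ultimately show False unfolding \<delta>_def by (elim conjE) argo
qed

locale rr =
  fixes d_close d_open d_min d_max t1 a g t2 t3 g2 :: real
  assumes dop: "0 < d_open" and t1pos: "0 < t1" and a_def: "a = t1 + (d_min - d_close)"
    and t1a: "t1 < a" and ag: "a < g" and gad: "g - a < d_close" and gt2: "g < t2"
    and dmin: "d_min \<le> t2 - t1" and dmax: "t2 - t1 \<le> d_max" and t23: "t2 < t3"
    and t3g2: "t3 < g2" and g2d: "g2 - t3 < d_open"
begin

definition R :: "real \<Rightarrow> unit st" where
  "R t = \<lparr>TS = (\<lambda>x. if t1 \<le> t \<and> t < t2 then Coming else if t2 \<le> t \<and> t < t3 then Incrossing else Empty),
          DL = (\<lambda>x. if t1 < t \<and> t \<le> t3 then ereal a else \<infinity>),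
          Dir = (if a < t \<and> t \<le> t3 then DClose else DOpen),
          Gate = (if g < t \<and> t \<le> g2 then Closed else Opened)\<rparr>"

definition Rp :: "real \<Rightarrow> unit st" where
  "Rp t = \<lparr>TS = (\<lambda>x. if t1 \<le> t \<and> t < t2 then Coming else if t2 \<le> t \<and> t < t3 then Incrossing else Empty),
          DL = (\<lambda>x. if t1 \<le> t \<and> t < t3 then ereal a else \<infinity>),
          Dir = (if a \<le> t \<and> t < t3 then DClose else DOpen),
          Gate = (if g \<le> t \<and> t < g2 then Closed else Opened)\<rparr>"

definition Rm :: "real \<Rightarrow> unit st" where
  "Rm t = \<lparr>TS = (\<lambda>x. if t1 < t \<and> t \<le> t2 then Coming else if t2 < t \<and> t \<le> t3 then Incrossing else Empty),
          DL = (\<lambda>x. if t1 < t \<and> t \<le> t3 then ereal a else \<infinity>),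
          Dir = (if a < t \<and> t \<le> t3 then DClose else DOpen),
          Gate = (if g < t \<and> t \<le> g2 then Closed else Opened)\<rparr>"

abbreviation "P \<equiv> {t1, a, g, t2, t3, g2}"

lemma cR: "p \<le> t \<or> t + e \<le> p \<Longrightarrow> t < u \<Longrightarrow> u < t + e \<Longrightarrow>
   (p \<le> u \<longleftrightarrow> p \<le> t) \<and> (u < p \<longleftrightarrow> t < p) \<and> (p < u \<longleftrightarrow> p \<le> t) \<and> (u \<le> p \<longleftrightarrow> t < p)"
  for p t e u :: real by auto

lemma cL: "t \<le> p \<or> p \<le> t - e \<Longrightarrow> t - e < u \<Longrightarrow> u < t \<Longrightarrow>
   (p \<le> u \<longleftrightarrow> p < t) \<and> (u < p \<longleftrightarrow> t \<le> p) \<and> (p < u \<longleftrightarrow> p < t) \<and> (u \<le> p \<longleftrightarrow> t \<le> p)"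
  for p t e u :: real by auto

lemma cP: "p < u \<or> v < p \<Longrightarrow> u < v \<Longrightarrow>
   (p \<le> u \<longleftrightarrow> p \<le> v) \<and> (u < p \<longleftrightarrow> v < p) \<and> (p < u \<longleftrightarrow> p < v) \<and> (u \<le> p \<longleftrightarrow> v \<le> p)"
  for p u v :: real by auto

lemma rlimR: "rlim R t = Rp t"
proof -
  obtain e where e: "e > 0" "\<forall>p\<in>P. p \<le> t \<or> t + e \<le> p" using eps_right[of P t] by auto
  show ?thesis
  proof (rule rlim_eq[OF e(1)])
    fix u assume u: "t < u" "u < t + e"
    note c = cR[OF _ u]
    show "R u = Rp t" unfolding R_def Rp_def
      using c[of t1] c[of a] c[of g] c[of t2] c[of t3] c[of g2] e(2)
      by (simp only: insert_iff simp_thms ball_simps)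
  qed
qed

lemma llimR: "llim R t = Rm t"
proof -
  obtain e where e: "e > 0" "\<forall>p\<in>P. t \<le> p \<or> p \<le> t - e" using eps_left[of P t] by auto
  show ?thesis
  proof (rule llim_eq[OF e(1)])
    fix u assume u: "t - e < u" "u < t"
    note c = cL[OF _ u]
    show "R u = Rm t" unfolding R_def Rm_def
      using c[of t1] c[of a] c[of g] c[of t2] c[of t3] c[of g2] e(2)
      by (simp only: insert_iff simp_thms ball_simps)
  qed
qed

lemma prerunR: "prerun R"
proof (rule prerun_intro[of P])
  fix u v :: real assume uv: "0 < u" "u < v" "\<forall>p\<in>P. p < u \<or> v < p"
  note c = cP[OF _ uv(2)]
  show "R u = R v" unfolding R_def
    using c[of t1] c[of a] c[of g] c[of t2] c[of t3] c[of g2] uv(3)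
    by (simp only: insert_iff simp_thms ball_simps)
qed simp

end


context rr begin

definition CUe :: "real \<Rightarrow> unit upd set" where
  "CUe t = (if t = t1 then {UDL () (ereal a)} else {}) \<union> (if t = a then {UDir DClose} else {})
     \<union> (if t = t3 then {UDL () \<infinity>, UDir DOpen} else {})"

lemma CU: "controller_upds d_close d_open d_min t (R t) = CUe t"
proof -
  have o: "t1 < a" "a < t3" "t1 < t3" "t1 < t2" "t2 < t3" using t1a ag gt2 t23 by linarith+
  show ?thesis
    unfolding controller_upds_def CUe_def R_def safe_to_open_def
    using o dop a_def by (auto simp: not_less)
qed

lemma GU: "gate_upds (R t) = {UGate (if a < t \<and> t \<le> t3 then Closed else Opened)}"
  unfolding gate_upds_def R_def by auto

lemma consCU: "consistent (CUe t)"
  using t1a ag gt2 t23 unfolding consistent_def CUe_def by auto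

lemma consGU: "consistent (gate_upds (R t))"
  unfolding GU consistent_def by auto

definition Aset :: "real \<Rightarrow> agent set" where
  "Aset t = {ControllerA} \<union> (if t = g \<or> t = g2 then {GateA} else {})"

lemma apply_upds_empty: "apply_upds {} s = s"
  unfolding apply_upds_def by simp

lemma execR: "Rp t = exec d_close d_open d_min (Aset t) t (R t)"
proof -
  have o: "t1 < a" "a < g" "g < t2" "t2 < t3" "t3 < g2" using t1a ag gt2 t23 t3g2 by linarith+
  have U: "(\<Union>x\<in>Aset t. if consistent (module_upds d_close d_open d_min x t (R t))
                        then module_upds d_close d_open d_min x t (R t) else {})
        = CUe t \<union> (if t = g \<or> t = g2 then gate_upds (R t) else {})"
    unfolding Aset_def module_upds_def using consCU consGU by (auto simp: CU)
  have U2: "CUe t \<union> (if t = g \<or> t = g2 then gate_upds (R t) else {}) =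
     (if t = t1 then {UDL () (ereal a)} else {}) \<union> (if t = a then {UDir DClose} else {})
     \<union> (if t = t3 then {UDL () \<infinity>, UDir DOpen} else {})
     \<union> (if t = g then {UGate Closed} else {}) \<union> (if t = g2 then {UGate Opened} else {})"
    unfolding CUe_def GU using o by auto
  have E: "exec d_close d_open d_min (Aset t) t (R t) = apply_upds
     ((if t = t1 then {UDL () (ereal a)} else {}) \<union> (if t = a then {UDir DClose} else {})
     \<union> (if t = t3 then {UDL () \<infinity>, UDir DOpen} else {})
     \<union> (if t = g then {UGate Closed} else {}) \<union> (if t = g2 then {UGate Opened} else {})) (R t)"
    unfolding exec_def U U2 ..
  consider "t = t1" | "t = a" | "t = g" | "t = t3" | "t = g2"
    | "t \<noteq> t1" "t \<noteq> a" "t \<noteq> g" "t \<noteq> t3" "t \<noteq> g2" by blast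
  then show ?thesis
  proof cases
    case 1 then show ?thesis unfolding E using o
      by (simp add: apply_upds_def Rp_def R_def fun_eq_iff)
  next
    case 2 then show ?thesis unfolding E using o
      by (simp add: apply_upds_def Rp_def R_def fun_eq_iff)
  next
    case 3 then show ?thesis unfolding E using o
      by (simp add: apply_upds_def Rp_def R_def fun_eq_iff)
  next
    case 4 then show ?thesis unfolding E using o
      by (simp add: apply_upds_def Rp_def R_def fun_eq_iff)
  next
    case 5 then show ?thesis unfolding E using o
      by (simp add: apply_upds_def Rp_def R_def fun_eq_iff)
  next
    case 6 then show ?thesis unfolding E using o
      by (auto simp add: apply_upds_empty Rp_def R_def fun_eq_iff)
  qed
qed

end


context rr begin

lemma orders: "0 < t1" "t1 < a" "a < g" "g < t2" "t2 < t3" "t3 < g2" "t1 < t2" "t1 < t3" "a < t3" "g < t3" "a < g2" "g < g2"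
  using t1pos t1a ag gt2 t23 t3g2 by linarith+

lemma isrunR: "is_run d_close d_open d_min R"
  unfolding is_run_def
proof (intro conjI allI impI)
  show "prerun R" by (rule prerunR)
next
  fix t :: real assume "0 \<le> t" "rlim R t \<noteq> R t"
  show "\<exists>A. rlim R t = exec d_close d_open d_min A t (R t)"
    using execR rlimR by metis
  show "TS (rlim R t) = TS (R t)" unfolding rlimR by (simp add: Rp_def R_def)
next
  fix t :: real assume "0 < t" "llim R t \<noteq> R t"
  show "DL (llim R t) = DL (R t)" "Dir (llim R t) = Dir (R t)" "Gate (llim R t) = Gate (R t)"
    unfolding llimR by (simp_all add: Rm_def R_def)
qed

lemma immR: "immediate d_close d_open d_min ControllerA R"
  unfolding immediate_def
proof (intro allI impI)
  fix t :: real assume "0 \<le> t" "enabled d_close d_open d_min ControllerA t (R t)"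
  then obtain u where "u \<in> CUe t" unfolding enabled_def module_upds_def CU by auto
  then have tt: "t = t1 \<or> t = a \<or> t = t3" unfolding CUe_def by (auto split: if_splits)
  have ne: "Rp t \<noteq> R t"
  proof -
    have "DL (Rp t) \<noteq> DL (R t) \<or> Dir (Rp t) \<noteq> Dir (R t)"
      using tt orders by (auto simp: Rp_def R_def fun_eq_iff)
    then show ?thesis by auto
  qed
  show "fires d_close d_open d_min ControllerA R t"
    unfolding fires_def rlimR using ne execR by (auto simp: Aset_def)
qed

lemma boundR: "bounded d_close d_open d_min GateA R"
  unfolding bounded_def
proof (rule disjI2, rule exI[of _ "g2 + 1"], intro conjI notI)
  show "0 < g2 + 1" using orders by linarith
next
  assume "\<exists>t\<ge>0. \<forall>s. t < s \<and> s < t + (g2 + 1) \<longrightarrow>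
             enabled d_close d_open d_min GateA s (R s) \<and> \<not> fires d_close d_open d_min GateA R s"
  then obtain t where t: "t \<ge> 0" "\<forall>s. t < s \<and> s < t + (g2 + 1) \<longrightarrow>
             enabled d_close d_open d_min GateA s (R s)" by blast
  define s where "s = max t g2 + 1/2"
  have "t < s \<and> s < t + (g2 + 1)" using t(1) orders by (auto simp: s_def max_def)
  then have en: "enabled d_close d_open d_min GateA s (R s)" using t(2) by blast
  have "g2 < s" by (simp add: s_def max_def)
  then have "\<not> enabled d_close d_open d_min GateA s (R s)"
    using orders unfolding enabled_def module_upds_def GU by (auto simp: changes_def R_def)
  then show False using en by blast
qed

lemma timing1: "\<not> (\<exists>t\<ge>0. \<forall>s. t < s \<and> s < t + d_close \<longrightarrow> Dir (R s) = DClose \<and> Gate (R s) = Opened)"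
proof
  assume "\<exists>t\<ge>0. \<forall>s. t < s \<and> s < t + d_close \<longrightarrow> Dir (R s) = DClose \<and> Gate (R s) = Opened"
  then obtain t where t: "\<forall>s. t < s \<and> s < t + d_close \<longrightarrow> Dir (R s) = DClose \<and> Gate (R s) = Opened" by blast
  have "\<forall>s. t < s \<and> s < t + d_close \<longrightarrow> a < s \<and> s \<le> g"
  proof (intro allI impI)
    fix s assume "t < s \<and> s < t + d_close"
    then have "Dir (R s) = DClose \<and> Gate (R s) = Opened" using t by blast
    then show "a < s \<and> s \<le> g" using orders by (auto simp: R_def split: if_splits)
  qed
  then show False using no_long_interval[OF ag gad] by blast
qed

lemma timing2: "\<not> (\<exists>t\<ge>0. \<forall>s. t < s \<and> s < t + d_open \<longrightarrow> Dir (R s) = DOpen \<and> Gate (R s) = Closed)"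
proof
  assume "\<exists>t\<ge>0. \<forall>s. t < s \<and> s < t + d_open \<longrightarrow> Dir (R s) = DOpen \<and> Gate (R s) = Closed"
  then obtain t where t: "\<forall>s. t < s \<and> s < t + d_open \<longrightarrow> Dir (R s) = DOpen \<and> Gate (R s) = Closed" by blast
  have "\<forall>s. t < s \<and> s < t + d_open \<longrightarrow> t3 < s \<and> s \<le> g2"
  proof (intro allI impI)
    fix s assume "t < s \<and> s < t + d_open"
    then have "Dir (R s) = DOpen \<and> Gate (R s) = Closed" using t by blast
    then show "t3 < s \<and> s \<le> g2" using orders by (auto simp: R_def split: if_splits)
  qed
  then show False using no_long_interval[OF t3g2 g2d] by blast
qed

lemma motionR: "train_motion d_min d_max R x"
  unfolding train_motion_def
proof (rule exI[of _ "\<lambda>i. if i = 0 then 0 else if i = 1 then t1 else if i = 2 then t2 else t3"],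
       intro conjI disjI2 exI[of _ 3])
  show "(if (0::nat) = 0 then 0 else if (0::nat) = 1 then t1 else if (0::nat) = 2 then t2 else t3) = (0::real)" by simp
  show "3 dvd (3::nat)" by simp
  show "\<forall>i<3. (if i = 0 then 0 else if i = 1 then t1 else if i = 2 then t2 else t3)
       < (if Suc i = 0 then 0 else if Suc i = 1 then t1 else if Suc i = 2 then t2 else t3)"
    using orders by (auto simp: less_Suc_eq numeral_3_eq_3)
  show "\<forall>i. 3 * i + 3 \<le> 3 \<longrightarrow> motion_block d_min d_max R x
      (\<lambda>i. if i = 0 then 0 else if i = 1 then t1 else if i = 2 then t2 else t3) i"
    using orders dmin dmax by (auto simp: motion_block_def R_def)
  show "\<forall>t\<ge>(if (3::nat) = 0 then 0 else if (3::nat) = 1 then t1 else if (3::nat) = 2 then t2 else t3).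
      TS (R t) x = Empty"
    using orders by (auto simp: R_def)
qed

lemma regularR: "regular_run d_close d_open d_min d_max R"
  unfolding regular_run_def
  using isrunR immR boundR timing1 timing2 motionR orders
  by (auto simp: initial_def R_def)

end



theorem mainTheorem11:
  fixes d_close d_open d_min d_max :: real
  assumes "0 < d_close" and "d_close < d_min" and "d_min \<le> d_max" and "0 < d_open"
  shows "(\<forall>c. 0 \<le> c \<and> c < d_open \<longrightarrow>
            (\<exists>R :: real \<Rightarrow> unit st. regular_run d_close d_open d_min d_max R \<and>
              (\<exists>\<alpha> \<beta>. 0 \<le> \<alpha> \<and> \<alpha> < \<beta> \<and> \<alpha> + c < \<beta> - Delta_close d_close d_min d_max \<and>
                 (\<forall>t x. \<alpha> < t \<and> t < \<beta> \<longrightarrow> TS (R t) x \<noteq> Incrossing) \<and>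
                 (\<exists>t. \<alpha> + c \<le> t \<and> t \<le> \<beta> - Delta_close d_close d_min d_max \<and> Gate (R t) \<noteq> Opened))))
       \<and> (\<forall>C. C < Delta_close d_close d_min d_max \<longrightarrow>
            (\<exists>R :: real \<Rightarrow> unit st. regular_run d_close d_open d_min d_max R \<and>
              (\<exists>\<alpha> \<beta>. 0 \<le> \<alpha> \<and> \<alpha> < \<beta> \<and> \<alpha> + d_open < \<beta> - C \<and>
                 (\<forall>t x. \<alpha> < t \<and> t < \<beta> \<longrightarrow> TS (R t) x \<noteq> Incrossing) \<and>
                 (\<exists>t. \<alpha> + d_open \<le> t \<and> t \<le> \<beta> - C \<and> Gate (R t) \<noteq> Opened))))"
proof (intro conjI allI impI)
  fix c :: real assume c: "0 \<le> c \<and> c < d_open"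
  define t1 :: real where "t1 = 1"
  define a where "a = t1 + (d_min - d_close)"
  define g where "g = a + d_close / 2"
  define t2 where "t2 = t1 + d_min"
  define t3 where "t3 = t2 + 1"
  define g2 where "g2 = t3 + (c + d_open) / 2"
  interpret I: rr d_close d_open d_min d_max t1 a g t2 t3 g2
    by unfold_locales (use assms c in \<open>auto simp: t1_def a_def g_def t2_def t3_def g2_def\<close>)
  let ?D = "Delta_close d_close d_min d_max"
  have D: "0 < ?D" using assms by (simp add: Delta_close_def)
  show "\<exists>R :: real \<Rightarrow> unit st. regular_run d_close d_open d_min d_max R \<and>
              (\<exists>\<alpha> \<beta>. 0 \<le> \<alpha> \<and> \<alpha> < \<beta> \<and> \<alpha> + c < \<beta> - ?D \<and>
                 (\<forall>t x. \<alpha> < t \<and> t < \<beta> \<longrightarrow> TS (R t) x \<noteq> Incrossing) \<and>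
                 (\<exists>t. \<alpha> + c \<le> t \<and> t \<le> \<beta> - ?D \<and> Gate (R t) \<noteq> Opened))"
  proof (intro exI conjI)
    show "regular_run d_close d_open d_min d_max I.R" by (rule I.regularR)
    show "0 \<le> t3" using I.orders by linarith
    show "t3 < t3 + c + ?D + 1" using D c by linarith
    show "t3 + c < t3 + c + ?D + 1 - ?D" by linarith
    show "\<forall>t x. t3 < t \<and> t < t3 + c + ?D + 1 \<longrightarrow> TS (I.R t) x \<noteq> Incrossing"
      by (auto simp: I.R_def)
    show "t3 + c \<le> t3 + c" by simp
    show "t3 + c \<le> t3 + c + ?D + 1 - ?D" by simp
    have "g < t3 + c" using I.orders c by linarith
    moreover have "t3 + c \<le> g2" using c by (simp add: g2_def)
    ultimately show "Gate (I.R (t3 + c)) \<noteq> Opened" by (simp add: I.R_def)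
  qed
next
  fix C :: real assume C: "C < Delta_close d_close d_min d_max"
  define t1 :: real where "t1 = d_open + \<bar>C\<bar> + 1"
  define a where "a = t1 + (d_min - d_close)"
  define e1 where "e1 = min d_close (Delta_close d_close d_min d_max - C) / 2"
  define g where "g = a + e1"
  define t2 where "t2 = t1 + d_max"
  define t3 where "t3 = t2 + \<bar>C\<bar> + 1"
  define g2 where "g2 = t3 + d_open / 2"
  have e1: "0 < e1" "e1 < d_close" "e1 < Delta_close d_close d_min d_max - C"
    using assms C by (auto simp: e1_def min_def)
  interpret I: rr d_close d_open d_min d_max t1 a g t2 t3 g2
    by unfold_locales (use assms e1 in \<open>auto simp: t1_def a_def g_def t2_def t3_def g2_def\<close>)
  show "\<exists>R :: real \<Rightarrow> unit st. regular_run d_close d_open d_min d_max R \<and>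
              (\<exists>\<alpha> \<beta>. 0 \<le> \<alpha> \<and> \<alpha> < \<beta> \<and> \<alpha> + d_open < \<beta> - C \<and>
                 (\<forall>t x. \<alpha> < t \<and> t < \<beta> \<longrightarrow> TS (R t) x \<noteq> Incrossing) \<and>
                 (\<exists>t. \<alpha> + d_open \<le> t \<and> t \<le> \<beta> - C \<and> Gate (R t) \<noteq> Opened))"
  proof (intro exI conjI)
    show "regular_run d_close d_open d_min d_max I.R" by (rule I.regularR)
    show "0 \<le> (0::real)" by simp
    show "0 < t2" using I.orders by linarith
    show "0 + d_open < t2 - C" using assms abs_ge_self[of C] abs_ge_minus_self[of C] unfolding t2_def t1_def by linarith
    show "\<forall>t x. 0 < t \<and> t < t2 \<longrightarrow> TS (I.R t) x \<noteq> Incrossing"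
      by (auto simp: I.R_def)
    show "0 + d_open \<le> t2 - C" using assms abs_ge_self[of C] abs_ge_minus_self[of C] unfolding t2_def t1_def by linarith
    show "t2 - C \<le> t2 - C" by simp
    have "g < t2 - C" using e1(3) by (simp add: g_def a_def t2_def Delta_close_def)
    moreover have "t2 - C \<le> g2" using assms abs_ge_self[of C] abs_ge_minus_self[of C] unfolding g2_def t3_def by linarith
    ultimately show "Gate (I.R (t2 - C)) \<noteq> Opened" by (simp add: I.R_def)
  qed
qed


end
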